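(* Let $g(x)=\sin(x)^2$ and for positive integers $m,n$ let $\tilde{G}(m,n)=\frac{1}{\pi}\int_{-\pi/2}^{\pi/2}\prod_{i=0}^{n-1} g(x+mi\pi/n)\,dx$. Then $\tilde{G}(1,n)=\frac{2}{4^n}$ for every positive integer $n$, and $\tilde G(m,n)\ge\tilde G(1,n)$ for all positive integers $m,n$. *)

theory Defs
  imports "HOL-Analysis.Analysis"
begin

definition g :: "real \<Rightarrow> real" where
  "g x = (sin x)^2"

definition Gtilde :: "nat \<Rightarrow> nat \<Rightarrow> real" where
  "Gtilde m n = (1 / pi) *
     integral {-pi/2..pi/2} (\<lambda>x. \<Prod>i<n. g (x + real m * real i * pi / real n))"

end

theory Submission
  imports Defs "HOL-Computational_Algebra.Fundamental_Theorem_Algebra"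
begin

lemma roots_prod:
  assumes "k > 0"
  shows "(\<Prod>z\<in>{z::complex. z^k = 1}. (t - z)) = t^k - 1"
proof -
  define p :: "complex poly" where "p = monom 1 k + [:-1:]"
  have deg: "degree p = k" using assms unfolding p_def
    by (subst degree_add_eq_left) (auto simp: degree_monom_eq)
  have lc: "lead_coeff p = 1" using deg assms unfolding p_def by (cases k) (auto simp: coeff_monom)
  have pp: "poly p z = z^k - 1" for z unfolding p_def by (simp add: poly_monom)
  have rsq: "rsquarefree p"
    unfolding rsquarefree_roots
  proof (intro allI notI)
    fix a assume "poly p a = 0 \<and> poly (pderiv p) a = 0"
    then have a1: "a^k = 1" and a2: "poly (pderiv p) a = 0" using pp by auto
    have "a \<noteq> 0" using a1 assms by (auto simp: power_0_left)
    moreover have "poly (pderiv p) a = of_nat k * a^(k-1)"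
      unfolding p_def by (simp add: pderiv_add pderiv_monom poly_monom)
    ultimately show False using a2 assms by simp
  qed
  have "smult (lead_coeff p) (\<Prod>z|poly p z = 0. [:-z, 1:]) = p"
    by (rule complex_poly_decompose_rsquarefree[OF rsq])
  then have "(\<Prod>z|poly p z = 0. [:-z, 1:]) = p" using lc by simp
  then have "poly (\<Prod>z|poly p z = 0. [:-z, 1:]) t = poly p t" by simp
  then show ?thesis by (simp add: poly_prod pp)
qed

lemma prim_prod:
  fixes \<gamma> t :: complex
  assumes "k > 0" "\<gamma>^k = 1" "\<And>j. 0 < j \<Longrightarrow> j < k \<Longrightarrow> \<gamma>^j \<noteq> 1"
  shows "(\<Prod>i<k. t - \<gamma>^i) = t^k - 1"
proof -
  have g0: "\<gamma> \<noteq> 0" using assms by (auto simp: power_0_left)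
  have inj: "inj_on (\<lambda>i. \<gamma>^i) {..<k}"
  proof (rule inj_onI)
    fix i j assume ij: "i \<in> {..<k}" "j \<in> {..<k}" "\<gamma>^i = \<gamma>^j"
    show "i = j"
    proof (rule ccontr)
      assume "i \<noteq> j"
      then consider "i < j" | "j < i" by linarith
      then show False
      proof cases
        case 1
        have "\<gamma>^j = \<gamma>^i * \<gamma>^(j-i)" using 1 by (simp add: power_add[symmetric])
        then have "\<gamma>^(j-i) = 1" using ij g0 by simp
        moreover have "0 < j - i" "j - i < k" using 1 ij by auto
        ultimately show False using assms(3) by blast
      next
        case 2
        have "\<gamma>^i = \<gamma>^j * \<gamma>^(i-j)" using 2 by (simp add: power_add[symmetric])
        then have "\<gamma>^(i-j) = 1" using ij g0 by simp
        moreover have "0 < i - j" "i - j < k" using 2 ij by auto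
        ultimately show False using assms(3) by blast
      qed
    qed
  qed
  have sub: "(\<lambda>i. \<gamma>^i) ` {..<k} \<subseteq> {z. z^k = 1}"
  proof
    fix z assume "z \<in> (\<lambda>i. \<gamma>^i) ` {..<k}"
    then obtain i where "z = \<gamma>^i" by auto
    then have "z^k = (\<gamma>^k)^i" by (metis mult.commute power_mult)
    then show "z \<in> {z. z^k = 1}" using assms(2) by simp
  qed
  have "card ((\<lambda>i. \<gamma>^i) ` {..<k}) = card {z::complex. z^k = 1}"
    using inj card_roots_unity_eq[OF assms(1)] by (simp add: card_image)
  then have eq: "(\<lambda>i. \<gamma>^i) ` {..<k} = {z. z^k = 1}"
    using sub finite_roots_unity[of k] assms(1) by (intro card_subset_eq) auto
  have "(\<Prod>i<k. t - \<gamma>^i) = (\<Prod>z\<in>(\<lambda>i. \<gamma>^i) ` {..<k}. t - z)"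
    using inj by (simp add: prod.reindex)
  also have "\<dots> = t^k - 1" using eq roots_prod[OF assms(1)] by simp
  finally show ?thesis .
qed

lemma periodic_prod:
  fixes \<gamma> :: complex
  assumes "\<gamma>^k = 1"
  shows "(\<Prod>i<q*k. f (\<gamma>^i)) = (\<Prod>i<k. f (\<gamma>^i))^q"
proof -
  have "(\<Prod>i<q*k. f (\<gamma>^i)) = (\<Prod>r<q. \<Prod>i\<in>{r*k..<r*k+k}. f (\<gamma>^i))"
    by (rule prod.nat_group[symmetric])
  also have "\<dots> = (\<Prod>r<q. \<Prod>i<k. f (\<gamma>^i))"
  proof (rule prod.cong[OF refl])
    fix r
    have "(\<Prod>i\<in>{r*k..<r*k+k}. f (\<gamma>^i)) = (\<Prod>i\<in>{0..<k}. f (\<gamma>^(i + r*k)))"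
      using prod.shift_bounds_nat_ivl[of "\<lambda>i. f (\<gamma>^i)" 0 "r*k" k] by (simp add: add.commute)
    also have "\<dots> = (\<Prod>i<k. f (\<gamma>^i))"
    proof -
      have "\<gamma>^(r*k) = 1" by (metis assms mult.commute power_mult power_one)
      then show ?thesis by (simp add: power_add atLeast0LessThan)
    qed
    finally show "(\<Prod>i\<in>{r*k..<r*k+k}. f (\<gamma>^i)) = (\<Prod>i<k. f (\<gamma>^i))" .
  qed
  also have "\<dots> = (\<Prod>i<k. f (\<gamma>^i))^q" by simp
  finally show ?thesis .
qed

lemma cmod_cis_diff: "(cmod (cis a - cis b))^2 = 4 * sin ((b - a)/2)^2"
proof -
  have "(cmod (cis a - cis b))^2 = (cos a - cos b)^2 + (sin a - sin b)^2"
    by (simp add: cmod_power2)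
  also have "\<dots> = 2 - 2 * cos (a - b)"
    by (simp add: cos_diff power2_eq_square algebra_simps)
  also have "cos (a - b) = 1 - 2 * sin ((b-a)/2)^2"
  proof -
    have "cos (a-b) = cos (b-a)" by (metis cos_minus minus_diff_eq)
    also have "b - a = 2*((b-a)/2)" by simp
    also have "cos (2*((b-a)/2)) = 1 - 2 * sin ((b-a)/2)^2" by (rule cos_double_sin)
    finally show ?thesis .
  qed
  finally show ?thesis by simp
qed

lemma sin2_int:
  assumes "k > 0"
  shows "((\<lambda>x. sin (real k * x)^2) has_integral pi/2) {-pi/2..pi/2}"
proof -
  define F where "F x = x/2 - sin (2 * real k * x) / (4 * real k)" for x
  have d: "(F has_vector_derivative sin (real k * x)^2) (at x within {-pi/2..pi/2})" for x
  proof -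
    have "(F has_real_derivative (1/2 - cos (2 * real k * x) * (2 * real k) / (4 * real k))) (at x)"
      unfolding F_def by (auto intro!: derivative_eq_intros)
    moreover have "1/2 - cos (2 * real k * x) * (2 * real k) / (4 * real k) = sin (real k * x)^2"
      using assms cos_double_sin[of "real k * x"] by (simp add: field_simps)
    ultimately show ?thesis
      by (simp add: has_real_derivative_iff_has_vector_derivative has_vector_derivative_at_within)
  qed
  have s1: "sin (2 * real k * (pi/2)) = 0"
  proof -
    have "2 * real k * (pi/2) = real k * pi" by simp
    then show ?thesis by (simp only: sin_npi)
  qed
  have s2: "sin (2 * real k * (-pi/2)) = 0" using s1 by simp
  have e: "F (pi/2) - F (-pi/2) = pi/2" unfolding F_def using s1 s2 by simp
  have "((\<lambda>x. sin (real k * x)^2) has_integral F (pi/2) - F (-pi/2)) {-pi/2..pi/2}"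
    by (rule fundamental_theorem_of_calculus) (use d in \<open>auto simp: pi_gt_zero\<close>)
  then show ?thesis unfolding e .
qed

lemma g_cis: "4 * g (x + t) = (cmod (cis (-2*x) - cis (2*t)))^2"
proof -
  have e: "(2*t - -2*x)/2 = x + t" by simp
  show ?thesis unfolding g_def cmod_cis_diff e by simp
qed

lemma order_exists:
  fixes \<gamma> :: complex
  assumes "n > 0" "\<gamma>^n = 1"
  obtains k where "k > 0" "k dvd n" "\<gamma>^k = 1" "\<And>j. 0 < j \<Longrightarrow> j < k \<Longrightarrow> \<gamma>^j \<noteq> 1"
proof -
  define k where "k = (LEAST k. 0 < k \<and> \<gamma>^k = 1)"
  have ex: "0 < n \<and> \<gamma>^n = 1" using assms by simp
  have k: "0 < k \<and> \<gamma>^k = 1" unfolding k_def using LeastI[of "\<lambda>k. 0 < k \<and> \<gamma>^k = 1" n] ex by blast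
  have kmin: "\<gamma>^j \<noteq> 1" if "0 < j" "j < k" for j
    using not_less_Least[of j "\<lambda>k. 0 < k \<and> \<gamma>^k = 1"] that unfolding k_def by auto
  have "\<gamma>^n = (\<gamma>^k)^(n div k) * \<gamma>^(n mod k)"
    by (metis div_mult_mod_eq power_add power_mult mult.commute)
  then have "\<gamma>^(n mod k) = 1" using k assms by simp
  then have "n mod k = 0" using kmin[of "n mod k"] k by (meson mod_less_divisor not_gr_zero)
  then have "k dvd n" by auto
  then show ?thesis using that k kmin by blast
qed

lemma prod_formula:
  assumes "m > 0" "n > 0"
  shows "\<exists>k q. k > 0 \<and> q > 0 \<and> n = q * k \<and> (m = 1 \<longrightarrow> k = n) \<and>
     (\<forall>x. (\<Prod>i<n. g (x + real m * real i * pi / real n)) = (4 * sin (real k * x)^2)^q / 4^n)"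
proof -
  define \<gamma> where "\<gamma> = cis (2 * (real m * pi / real n))"
  have gi: "\<gamma>^i = cis (2 * (real m * real i * pi / real n))" for i
    unfolding \<gamma>_def Complex.DeMoivre by (simp add: field_simps)
  have "\<gamma>^n = cis (2 * (real m * pi))" using gi[of n] assms by simp
  also have "\<dots> = 1"
    by (metis cis_2pi cis_multiple_2pi mult.assoc mult.commute Ints_of_nat)
  finally have gn: "\<gamma>^n = 1" .
  obtain k where k: "k > 0" "k dvd n" "\<gamma>^k = 1" "\<And>j. 0 < j \<Longrightarrow> j < k \<Longrightarrow> \<gamma>^j \<noteq> 1"
    using order_exists[OF assms(2) gn] by blast
  define q where "q = n div k"
  have nq: "n = q * k" using k(2) unfolding q_def by simp
  have q0: "q > 0" using nq assms(2) by (cases q) auto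
  have m1: "k = n" if "m = 1"
  proof (rule ccontr)
    assume "k \<noteq> n"
    then have "k < n" using k(2) assms(2) by (simp add: dvd_imp_le le_neq_implies_less)
    have "\<gamma>^k = exp (2 * of_real pi * \<i> * of_nat k / of_nat n)"
      unfolding gi cis_conv_exp using that by (simp add: field_simps)
    then have "n dvd k" using k(3) complex_root_unity_eq_1[of n k] assms by simp
    then show False using \<open>k < n\<close> k(1) by (meson dvd_imp_le not_le)
  qed
  have main: "(\<Prod>i<n. g (x + real m * real i * pi / real n)) = (4 * sin (real k * x)^2)^q / 4^n" for x
  proof -
    define u where "u = cis (-2*x)"
    have "(\<Prod>i<n. g (x + real m * real i * pi / real n)) = (\<Prod>i<n. (cmod (u - \<gamma>^i))^2 / 4)"
    proof (rule prod.cong[OF refl])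
      fix i
      show "g (x + real m * real i * pi / real n) = (cmod (u - \<gamma>^i))^2 / 4"
        using g_cis[of x "real m * real i * pi / real n"] unfolding u_def gi by simp
    qed
    also have "\<dots> = (\<Prod>i<n. cmod (u - \<gamma>^i))^2 / 4^n"
      by (simp add: prod_dividef prod_power_distrib)
    also have "(\<Prod>i<n. cmod (u - \<gamma>^i)) = cmod (\<Prod>i<n. u - \<gamma>^i)"
      by (rule prod_norm)
    also have "(\<Prod>i<n. u - \<gamma>^i) = (\<Prod>i<k. u - \<gamma>^i)^q"
      unfolding nq by (rule periodic_prod[OF k(3)])
    also have "(\<Prod>i<k. u - \<gamma>^i) = u^k - 1"
      by (rule prim_prod[OF k(1) k(3) k(4)])
    also have "(cmod ((u^k - 1)^q))^2 = ((cmod (u^k - cis (2*0)))^2)^q"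
      by (simp add: norm_power power_mult[symmetric] mult.commute)
    also have "u^k = cis (-2 * (real k * x))"
      unfolding u_def Complex.DeMoivre by (simp add: field_simps)
    also have "(cmod (cis (-2 * (real k * x)) - cis (2*0)))^2 = 4 * sin (real k * x)^2"
      unfolding cmod_cis_diff by simp
    finally show ?thesis .
  qed
  show ?thesis using k(1) q0 nq m1 main by blast
qed

lemma Gtilde_eq:
  assumes "m > 0" "n > 0"
  shows "\<exists>k q. k > 0 \<and> q > 0 \<and> n = q * k \<and> (m = 1 \<longrightarrow> k = n) \<and>
    Gtilde m n = (1/pi) * integral {-pi/2..pi/2} (\<lambda>x. (4 * sin (real k * x)^2)^q / 4^n)"
proof -
  obtain k q where kq: "k > 0" "q > 0" "n = q * k" "m = 1 \<longrightarrow> k = n"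
    "\<forall>x. (\<Prod>i<n. g (x + real m * real i * pi / real n)) = (4 * sin (real k * x)^2)^q / 4^n"
    using prod_formula[OF assms] by blast
  have "Gtilde m n = (1/pi) * integral {-pi/2..pi/2} (\<lambda>x. (4 * sin (real k * x)^2)^q / 4^n)"
    unfolding Gtilde_def using kq(5) by simp
  then show ?thesis using kq by blast
qed

theorem corollary5p2:
  shows "(\<forall>n::nat. n > 0 \<longrightarrow> Gtilde 1 n = 2 / 4 ^ n) \<and>
         (\<forall>m n::nat. m > 0 \<longrightarrow> n > 0 \<longrightarrow> Gtilde m n \<ge> Gtilde 1 n)"
proof -
  have one: "Gtilde 1 n = 2 / 4 ^ n" if n: "n > 0" for n
  proof -
    define P where "P k q \<longleftrightarrow> k > 0 \<and> q > 0 \<and> n = q * k \<and> ((1::nat) = 1 \<longrightarrow> k = n) \<and>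
      Gtilde 1 n = (1/pi) * integral {-pi/2..pi/2} (\<lambda>x. (4 * sin (real k * x)^2)^q / 4^n)" for k q
    have "\<exists>k q. P k q" unfolding P_def by (rule Gtilde_eq[OF zero_less_one n])
    then obtain k q where "P k q" by blast
    then have H: "k > 0 \<and> q > 0 \<and> n = q * k \<and> ((1::nat) = 1 \<longrightarrow> k = n) \<and>
      Gtilde 1 n = (1/pi) * integral {-pi/2..pi/2} (\<lambda>x. (4 * sin (real k * x)^2)^q / 4^n)"
      unfolding P_def .
    note kq = H[THEN conjunct1] H[THEN conjunct2, THEN conjunct1]
      H[THEN conjunct2, THEN conjunct2, THEN conjunct1]
      mp[OF H[THEN conjunct2, THEN conjunct2, THEN conjunct2, THEN conjunct1] refl]
      H[THEN conjunct2, THEN conjunct2, THEN conjunct2, THEN conjunct2]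
    have q1: "q = 1" using kq(3) n unfolding kq(4) by simp
    have "((\<lambda>x. (4 / 4^n) * sin (real k * x)^2) has_integral (4 / 4^n) * (pi/2)) {-pi/2..pi/2}"
      by (rule has_integral_mult_right[OF sin2_int[OF kq(1)]])
    moreover have "(\<lambda>x. (4 * sin (real k * x)^2)^q / 4^n) = (\<lambda>x. (4 / 4^n) * sin (real k * x)^2)"
      using q1 by (simp add: fun_eq_iff)
    ultimately have "integral {-pi/2..pi/2} (\<lambda>x. (4 * sin (real k * x)^2)^q / 4^n) = (4 / 4^n) * (pi/2)"
      by (metis integral_unique)
    then show ?thesis unfolding kq(5) by simp
  qed
  have two: "Gtilde m n \<ge> 2 / 4^n" if m: "m > 0" and n: "n > 0" for m n
  proof -
    define P where "P k q \<longleftrightarrow> k > 0 \<and> q > 0 \<and> n = q * k \<and> (m = 1 \<longrightarrow> k = n) \<and>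
      Gtilde m n = (1/pi) * integral {-pi/2..pi/2} (\<lambda>x. (4 * sin (real k * x)^2)^q / 4^n)" for k q
    have "\<exists>k q. P k q" unfolding P_def by (rule Gtilde_eq[OF m n])
    then obtain k q where "P k q" by blast
    then have H: "k > 0 \<and> q > 0 \<and> n = q * k \<and> (m = 1 \<longrightarrow> k = n) \<and>
      Gtilde m n = (1/pi) * integral {-pi/2..pi/2} (\<lambda>x. (4 * sin (real k * x)^2)^q / 4^n)"
      unfolding P_def .
    note kq = H[THEN conjunct1] H[THEN conjunct2, THEN conjunct1]
      H[THEN conjunct2, THEN conjunct2, THEN conjunct1]
      H[THEN conjunct2, THEN conjunct2, THEN conjunct2, THEN conjunct2]
    define h where "h x = (1 - real q) / 4^n + (4 * real q / 4^n) * sin (real k * x)^2" for x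
    have hi: "(h has_integral (pi * (1 + real q) / 4^n)) {-pi/2..pi/2}"
    proof -
      have c: "((\<lambda>x. (1 - real q) / 4^n) has_integral Henstock_Kurzweil_Integration.content {-pi/2..pi/2} *\<^sub>R ((1 - real q) / 4^n)) {-pi/2..pi/2}"
        by (rule has_integral_const_real)
      have s: "((\<lambda>x. (4 * real q / 4^n) * sin (real k * x)^2) has_integral (4 * real q / 4^n) * (pi/2)) {-pi/2..pi/2}"
        by (rule has_integral_mult_right[OF sin2_int[OF kq(1)]])
      have "(h has_integral (Henstock_Kurzweil_Integration.content {-pi/2..pi/2} *\<^sub>R ((1 - real q) / 4^n) + (4 * real q / 4^n) * (pi/2))) {-pi/2..pi/2}"
        unfolding h_def by (rule has_integral_add[OF c s])
      moreover have "Henstock_Kurzweil_Integration.content {-pi/2..pi/2} *\<^sub>R ((1 - real q) / 4^n) + (4 * real q / 4^n) * (pi/2) = pi * (1 + real q) / 4^n"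
        by (simp add: field_simps)
      ultimately show ?thesis by simp
    qed
    have cont: "(\<lambda>x. (4 * sin (real k * x)^2)^q / 4^n) integrable_on {-pi/2..pi/2}"
      by (intro integrable_continuous_interval continuous_intros) auto
    have le: "h x \<le> (4 * sin (real k * x)^2)^q / 4^n" for x
    proof -
      have "-1 \<le> 4 * sin (real k * x)^2 - 1" by simp
      from Bernoulli_inequality[OF this, of q]
      have "1 + real q * (4 * sin (real k * x)^2 - 1) \<le> (4 * sin (real k * x)^2)^q" by simp
      moreover have "h x = (1 + real q * (4 * sin (real k * x)^2 - 1)) / 4^n"
        unfolding h_def by (simp add: field_simps)
      ultimately show ?thesis by (simp add: divide_right_mono)
    qed
    have "pi * (1 + real q) / 4^n \<le> integral {-pi/2..pi/2} (\<lambda>x. (4 * sin (real k * x)^2)^q / 4^n)"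
      using has_integral_le[OF hi integrable_integral[OF cont]] le by blast
    then have "(1/pi) * (pi * (1 + real q) / 4^n) \<le> Gtilde m n"
      unfolding kq(4) by (intro mult_left_mono) auto
    moreover have "(1/pi) * (pi * (1 + real q) / 4^n) = (1 + real q) / 4^n" by simp
    moreover have "2 / 4^n \<le> (1 + real q) / 4^n" using kq(2) by (simp add: divide_right_mono)
    ultimately show ?thesis by linarith
  qed
  show ?thesis
  proof (intro conjI allI impI)
    fix n :: nat assume "n > 0" then show "Gtilde 1 n = 2 / 4^n" by (rule one)
  next
    fix m n :: nat assume "m > 0" "n > 0"
    then show "Gtilde 1 n \<le> Gtilde m n" using one[of n] two[of m n] by simp
  qed
qed

end
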